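(* The metrics $DID$ and $DIR$ satisfy intra-group fairness, while $DTD$ and $DTR$ do not. Here $m$ satisfies intra-group fairness if for every population $\mathcal D$, candidate set $D\subseteq\mathcal D$, ranking $r$ of $D$ and positions $i<j$ with $y(r(i))<y(r(j))$, one has $m(r_{i\leftrightarrow j})>m(r)$ whenever $r(i),r(j)\in G_1$, and $m(r_{i\leftrightarrow j})<m(r)$ whenever $r(i),r(j)\in G_0$.
   Context: A population is a finite set $\mathcal{D}$ of candidates partitioned into two nonempty groups, a non-protected group $G_0$ and a protected group $G_1$; each candidate $d$ has a relevance score $y(d)\in\mathbb R$. For a candidate set $D\subseteq\mathcal D$ with $n=|D|$, a ranking is a bijection $r:\{1,\dots,n\}\to D$ and $r^{-1}(d)$ is the position of $d$; $r_{i\leftrightarrow j}$ is $r$ with the candidates at positions $i$ and $j$ swapped. Position bias $b(k)=1/\log_2(k+1)$. For $G\in\{G_0,G_1\}$: $\mathrm{Exposure}(G|r)=\frac{1}{|G|}\sum_{d\in G\cap D} b(r^{-1}(d))$, $Y(G)=\frac1{|G|}\sum_{d\in G}y(d)$, $CTR(G|r)=\frac1{|G|}\sum_{d\in G\cap D} b(r^{-1}(d))\,y(d)$ ($|G|$ is the group size in the whole population). $DTD(r)=\frac{\mathrm{Exposure}(G_1|r)}{Y(G_1)}-\frac{\mathrm{Exposure}(G_0|r)}{Y(G_0)}$, $DTR(r)=\frac{\mathrm{Exposure}(G_1|r)}{\mathrm{Exposure}(G_0|r)}\cdot\frac{Y(G_0)}{Y(G_1)}$, $DID(r)=\frac{CTR(G_1|r)}{Y(G_1)}-\frac{CTR(G_0|r)}{Y(G_0)}$,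 $DIR(r)=\frac{CTR(G_1|r)}{CTR(G_0|r)}\cdot\frac{Y(G_0)}{Y(G_1)}$. *)

theory Defs
  imports Complex_Main
begin

text \<open>A population is given by two disjoint finite
nonempty groups G0 (non-protected) and G1 (protected); the population is their union.
y assigns relevance scores.\<close>

definition bias :: "nat \<Rightarrow> real" where
  "bias k = 1 / log 2 (real k + 1)"

definition is_ranking :: "nat set \<Rightarrow> (nat \<Rightarrow> nat) \<Rightarrow> bool" where
  "is_ranking D r \<longleftrightarrow> finite D \<and> bij_betw r {1..card D} D"

definition pos :: "nat set \<Rightarrow> (nat \<Rightarrow> nat) \<Rightarrow> nat \<Rightarrow> nat" where
  "pos D r d = inv_into {1..card D} r d"

definition swap_pos :: "(nat \<Rightarrow> nat) \<Rightarrow> nat \<Rightarrow> nat \<Rightarrow> (nat \<Rightarrow> nat)" where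
  "swap_pos r i j = (\<lambda>k. if k = i then r j else if k = j then r i else r k)"

definition exposure :: "nat set \<Rightarrow> nat set \<Rightarrow> (nat \<Rightarrow> nat) \<Rightarrow> real" where
  "exposure G D r = (\<Sum>d\<in>G \<inter> D. bias (pos D r d)) / real (card G)"

definition Yavg :: "nat set \<Rightarrow> (nat \<Rightarrow> real) \<Rightarrow> real" where
  "Yavg G y = (\<Sum>d\<in>G. y d) / real (card G)"

definition ctr :: "nat set \<Rightarrow> (nat \<Rightarrow> real) \<Rightarrow> nat set \<Rightarrow> (nat \<Rightarrow> nat) \<Rightarrow> real" where
  "ctr G y D r = (\<Sum>d\<in>G \<inter> D. bias (pos D r d) * y d) / real (card G)"

type_synonym metric = "nat set \<Rightarrow> nat set \<Rightarrow> (nat \<Rightarrow> real) \<Rightarrow> nat set \<Rightarrow> (nat \<Rightarrow> nat) \<Rightarrow> real"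

definition DTD :: metric where
  "DTD G0 G1 y D r = exposure G1 D r / Yavg G1 y - exposure G0 D r / Yavg G0 y"

definition DTR :: metric where
  "DTR G0 G1 y D r = (exposure G1 D r / exposure G0 D r) * (Yavg G0 y / Yavg G1 y)"

definition DID :: metric where
  "DID G0 G1 y D r = ctr G1 y D r / Yavg G1 y - ctr G0 y D r / Yavg G0 y"

definition DIR :: metric where
  "DIR G0 G1 y D r = (ctr G1 y D r / ctr G0 y D r) * (Yavg G0 y / Yavg G1 y)"

text \<open>Standing assumptions on a population and candidate set under which all four
metrics are well defined (all denominators positive): groups finite, nonempty,
disjoint; relevance scores positive; D contains candidates of both groups.\<close>
definition admissible :: "nat set \<Rightarrow> nat set \<Rightarrow> (nat \<Rightarrow> real) \<Rightarrow> nat set \<Rightarrow> bool" where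
  "admissible G0 G1 y D \<longleftrightarrow>
     finite G0 \<and> finite G1 \<and> G0 \<noteq> {} \<and> G1 \<noteq> {} \<and> G0 \<inter> G1 = {} \<and>
     (\<forall>d\<in>G0 \<union> G1. y d > 0) \<and>
     D \<subseteq> G0 \<union> G1 \<and> D \<inter> G0 \<noteq> {} \<and> D \<inter> G1 \<noteq> {}"

definition intra_group_fair :: "metric \<Rightarrow> bool" where
  "intra_group_fair m \<longleftrightarrow>
    (\<forall>G0 G1 y D r i j.
       admissible G0 G1 y D \<and> is_ranking D r \<and>
       1 \<le> i \<and> i < j \<and> j \<le> card D \<and> y (r i) < y (r j) \<longrightarrow>
         (r i \<in> G1 \<and> r j \<in> G1 \<longrightarrow> m G0 G1 y D (swap_pos r i j) > m G0 G1 y D r) \<and>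
         (r i \<in> G0 \<and> r j \<in> G0 \<longrightarrow> m G0 G1 y D (swap_pos r i j) < m G0 G1 y D r))"

end

theory Submission
  imports Defs
begin

lemma bias_strict:
  assumes "1 \<le> i" "i < j"
  shows "bias j < bias i"
proof -
  have a: "0 < log 2 (real i + 1)" using assms by simp
  have b: "log 2 (real i + 1) < log 2 (real j + 1)" using assms by simp
  show ?thesis unfolding bias_def using a b by (simp add: divide_strict_left_mono mult_pos_pos)
qed

lemma pos_swap:
  assumes R: "is_ranking D r" and ij: "1 \<le> i" "i < j" "j \<le> card D" and d: "d \<in> D"
  shows "pos D (swap_pos r i j) d = (if d = r i then j else if d = r j then i else pos D r d)"
proof -
  have fin: "finite D" and bij: "bij_betw r {1..card D} D" using R unfolding is_ranking_def by auto
  have inj: "inj_on r {1..card D}" using bij by (simp add: bij_betw_def)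
  have im: "r ` {1..card D} = D" using bij by (simp add: bij_betw_def)
  let ?s = "swap_pos r i j"
  define t where "t = (\<lambda>k::nat. if k = i then j else if k = j then i else k)"
  have st: "?s = r \<circ> t" unfolding t_def swap_pos_def by (rule ext) simp
  have injt: "inj_on t {1..card D}" unfolding t_def inj_on_def by auto
  have tA: "t ` {1..card D} \<subseteq> {1..card D}" unfolding t_def using ij by auto
  have injs: "inj_on ?s {1..card D}" unfolding st
    by (rule comp_inj_on[OF injt]) (rule inj_on_subset[OF inj tA])
  have iD: "i \<in> {1..card D}" "j \<in> {1..card D}" using ij by auto
  show ?thesis
  proof (cases "d = r i")
    case True
    have "?s j = d" using True ij unfolding swap_pos_def by auto
    then have "inv_into {1..card D} ?s d = j" by (rule inv_into_f_eq[OF injs iD(2)])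
    then show ?thesis unfolding pos_def using True by simp
  next
    case F1: False
    show ?thesis
    proof (cases "d = r j")
      case True
      have "?s i = d" using True ij unfolding swap_pos_def by auto
      then have "inv_into {1..card D} ?s d = i" by (rule inv_into_f_eq[OF injs iD(1)])
      then show ?thesis unfolding pos_def using True F1 by simp
    next
      case False
      have "d \<in> r ` {1..card D}" using d im by simp
      then obtain k where k: "k \<in> {1..card D}" "r k = d" by (metis imageE)
      have ki: "k \<noteq> i"
      proof
        assume "k = i" then show False using k(2) F1 by simp
      qed
      have kj: "k \<noteq> j"
      proof
        assume "k = j" then show False using k(2) False by simp
      qed
      have "?s k = d" using k(2) ki kj unfolding swap_pos_def by simp
      then have e1: "inv_into {1..card D} ?s d = k" by (rule inv_into_f_eq[OF injs k(1)])
      have e2: "inv_into {1..card D} r d = k" by (rule inv_into_f_eq[OF inj k(1) k(2)])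
      show ?thesis unfolding pos_def using False F1 e1 e2 by simp
    qed
  qed
qed

lemma sum_swap_in:
  assumes R: "is_ranking D r" and ij: "1 \<le> i" "i < j" "j \<le> card D"
    and G: "r i \<in> G" "r j \<in> G"
  shows "(\<Sum>d\<in>G \<inter> D. bias (pos D (swap_pos r i j) d) * f d) =
         (\<Sum>d\<in>G \<inter> D. bias (pos D r d) * f d) + (bias i - bias j) * (f (r j) - f (r i))"
proof -
  have fin: "finite D" and bij: "bij_betw r {1..card D} D" using R unfolding is_ranking_def by auto
  have inj: "inj_on r {1..card D}" using bij by (simp add: bij_betw_def)
  have im: "r ` {1..card D} = D" using bij by (simp add: bij_betw_def)
  have iD: "i \<in> {1..card D}" "j \<in> {1..card D}" using ij by auto
  have rD: "r i \<in> D" "r j \<in> D" using iD im by blast+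
  have ne: "r i \<noteq> r j"
  proof
    assume "r i = r j" then have "i = j" using inj_onD[OF inj _ iD] by blast
    then show False using ij by simp
  qed
  have pi: "pos D r (r i) = i" "pos D r (r j) = j"
    unfolding pos_def by (rule inv_into_f_f[OF inj iD(1)], rule inv_into_f_f[OF inj iD(2)])
  let ?A = "G \<inter> D - {r i, r j}"
  have finA: "finite (G \<inter> D)" using fin by simp
  have split: "\<And>g::nat\<Rightarrow>real. (\<Sum>d\<in>G \<inter> D. g d) = g (r i) + g (r j) + (\<Sum>d\<in>?A. g d)"
  proof -
    fix g :: "nat \<Rightarrow> real"
    have eq: "G \<inter> D = insert (r i) (insert (r j) ?A)" using G rD by auto
    have "(\<Sum>d\<in>G \<inter> D. g d) = (\<Sum>d\<in>insert (r i) (insert (r j) ?A). g d)"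
      by (rule arg_cong[where f="sum g", OF eq])
    also have "\<dots> = g (r i) + g (r j) + (\<Sum>d\<in>?A. g d)"
      using finA ne by (simp add: add.assoc)
    finally show "(\<Sum>d\<in>G \<inter> D. g d) = g (r i) + g (r j) + (\<Sum>d\<in>?A. g d)" .
  qed
  have rest: "(\<Sum>d\<in>?A. bias (pos D (swap_pos r i j) d) * f d) = (\<Sum>d\<in>?A. bias (pos D r d) * f d)"
    by (rule sum.cong) (auto simp: pos_swap[OF R ij])
  show ?thesis
    apply (subst split)+
    using rest pos_swap[OF R ij rD(1)] pos_swap[OF R ij rD(2)] ne pi
    by (simp add: algebra_simps)
qed

lemma sum_swap_out:
  assumes R: "is_ranking D r" and ij: "1 \<le> i" "i < j" "j \<le> card D"
    and G: "r i \<notin> G" "r j \<notin> G"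
  shows "(\<Sum>d\<in>G \<inter> D. bias (pos D (swap_pos r i j) d) * f d) =
         (\<Sum>d\<in>G \<inter> D. bias (pos D r d) * f d)"
  by (rule sum.cong) (use G in \<open>auto simp: pos_swap[OF R ij]\<close>)



lemma ctr_in:
  assumes R: "is_ranking D r" and ij: "1 \<le> i" "i < j" "j \<le> card D"
    and G: "r i \<in> G" "r j \<in> G"
  shows "ctr G y D (swap_pos r i j) = ctr G y D r + (bias i - bias j) * (y (r j) - y (r i)) / real (card G)"
  unfolding ctr_def sum_swap_in[OF R ij G] by (simp add: add_divide_distrib)

lemma ctr_out:
  assumes R: "is_ranking D r" and ij: "1 \<le> i" "i < j" "j \<le> card D"
    and G: "r i \<notin> G" "r j \<notin> G"
  shows "ctr G y D (swap_pos r i j) = ctr G y D r"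
  unfolding ctr_def sum_swap_out[OF R ij G] ..

lemma exposure_in:
  assumes R: "is_ranking D r" and ij: "1 \<le> i" "i < j" "j \<le> card D"
    and G: "r i \<in> G" "r j \<in> G"
  shows "exposure G D (swap_pos r i j) = exposure G D r"
  using sum_swap_in[OF R ij G, of "\<lambda>_. 1"] unfolding exposure_def by simp

lemma exposure_out:
  assumes R: "is_ranking D r" and ij: "1 \<le> i" "i < j" "j \<le> card D"
    and G: "r i \<notin> G" "r j \<notin> G"
  shows "exposure G D (swap_pos r i j) = exposure G D r"
  using sum_swap_out[OF R ij G, of "\<lambda>_. 1"] unfolding exposure_def by simp

lemma bias_pos: "1 \<le> k \<Longrightarrow> bias k > 0"
  unfolding bias_def by simp

lemma ctr_pos:
  assumes R: "is_ranking D r" and fG: "finite G" and ne: "G \<inter> D \<noteq> {}"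
    and y: "\<forall>d\<in>G. y d > 0"
  shows "ctr G y D r > 0"
proof -
  have fin: "finite D" and bij: "bij_betw r {1..card D} D" using R unfolding is_ranking_def by auto
  have im: "r ` {1..card D} = D" using bij by (simp add: bij_betw_def)
  have "(\<Sum>d\<in>G \<inter> D. bias (pos D r d) * y d) > 0"
  proof (rule sum_pos)
    show "finite (G \<inter> D)" using fin by simp
    show "G \<inter> D \<noteq> {}" by fact
    fix d assume d: "d \<in> G \<inter> D"
    have "d \<in> r ` {1..card D}" using d im by simp
    then have "pos D r d \<in> {1..card D}" unfolding pos_def by (rule inv_into_into)
    then have "bias (pos D r d) > 0" using bias_pos by simp
    moreover have "y d > 0" using d y by simp
    ultimately show "bias (pos D r d) * y d > 0" by simp
  qed
  moreover have "card G > 0" using fG ne by (auto simp: card_gt_0_iff)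
  ultimately show ?thesis unfolding ctr_def by simp
qed

lemma Yavg_pos:
  assumes fG: "finite G" and ne: "G \<noteq> {}" and y: "\<forall>d\<in>G. y d > 0"
  shows "Yavg G y > 0"
proof -
  have "(\<Sum>d\<in>G. y d) > 0" using sum_pos[OF fG ne, of y] y by blast
  moreover have "card G > 0" using fG ne by (auto simp: card_gt_0_iff)
  ultimately show ?thesis unfolding Yavg_def by simp
qed


lemma fair_core:
  assumes A: "admissible G0 G1 y D" and R: "is_ranking D r"
    and ij: "1 \<le> i" "i < j" "j \<le> card D" and yl: "y (r i) < y (r j)"
  shows "(r i \<in> G1 \<and> r j \<in> G1 \<longrightarrow>
            DID G0 G1 y D (swap_pos r i j) > DID G0 G1 y D r \<and>
            DIR G0 G1 y D (swap_pos r i j) > DIR G0 G1 y D r) \<and>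
         (r i \<in> G0 \<and> r j \<in> G0 \<longrightarrow>
            DID G0 G1 y D (swap_pos r i j) < DID G0 G1 y D r \<and>
            DIR G0 G1 y D (swap_pos r i j) < DIR G0 G1 y D r)"
proof -
  have f0: "finite G0" and f1: "finite G1" and n0: "G0 \<noteq> {}" and n1: "G1 \<noteq> {}"
    and dj: "G0 \<inter> G1 = {}" and yp: "\<forall>d\<in>G0 \<union> G1. y d > 0"
    and D0: "D \<inter> G0 \<noteq> {}" and D1: "D \<inter> G1 \<noteq> {}"
    using A unfolding admissible_def by auto
  have Y0: "Yavg G0 y > 0" using Yavg_pos[OF f0 n0] yp by simp
  have Y1: "Yavg G1 y > 0" using Yavg_pos[OF f1 n1] yp by simp
  have c0: "ctr G0 y D r > 0" using ctr_pos[OF R f0] D0 yp by (simp add: Int_commute)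
  have c1: "ctr G1 y D r > 0" using ctr_pos[OF R f1] D1 yp by (simp add: Int_commute)
  have k0: "real (card G0) > 0" using f0 n0 by (simp add: card_gt_0_iff)
  have k1: "real (card G1) > 0" using f1 n1 by (simp add: card_gt_0_iff)
  have dpos: "(bias i - bias j) * (y (r j) - y (r i)) > 0"
    using bias_strict[OF ij(1,2)] yl by simp
  show ?thesis
  proof (intro conjI impI)
    assume g: "r i \<in> G1 \<and> r j \<in> G1"
    then have ng: "r i \<notin> G0" "r j \<notin> G0" using dj by auto
    have e0: "ctr G0 y D (swap_pos r i j) = ctr G0 y D r" by (rule ctr_out[OF R ij ng])
    have e1: "ctr G1 y D (swap_pos r i j) = ctr G1 y D r + (bias i - bias j) * (y (r j) - y (r i)) / real (card G1)"
      using ctr_in[OF R ij] g by simp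
    have lt: "ctr G1 y D r < ctr G1 y D (swap_pos r i j)" using e1 dpos k1 by simp
    have "ctr G1 y D r / Yavg G1 y < ctr G1 y D (swap_pos r i j) / Yavg G1 y"
      using lt Y1 by (simp add: divide_strict_right_mono)
    then show "DID G0 G1 y D (swap_pos r i j) > DID G0 G1 y D r"
      unfolding DID_def e0 by simp
    have "ctr G1 y D r / ctr G0 y D r < ctr G1 y D (swap_pos r i j) / ctr G0 y D r"
      using lt c0 by (simp add: divide_strict_right_mono)
    moreover have "Yavg G0 y / Yavg G1 y > 0" using Y0 Y1 by simp
    ultimately show "DIR G0 G1 y D (swap_pos r i j) > DIR G0 G1 y D r"
      unfolding DIR_def e0 by (rule mult_strict_right_mono)
  next
    assume g: "r i \<in> G0 \<and> r j \<in> G0"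
    then have ng: "r i \<notin> G1" "r j \<notin> G1" using dj by auto
    have e1: "ctr G1 y D (swap_pos r i j) = ctr G1 y D r" by (rule ctr_out[OF R ij ng])
    have e0: "ctr G0 y D (swap_pos r i j) = ctr G0 y D r + (bias i - bias j) * (y (r j) - y (r i)) / real (card G0)"
      using ctr_in[OF R ij] g by simp
    have lt: "ctr G0 y D r < ctr G0 y D (swap_pos r i j)" using e0 dpos k0 by simp
    have "ctr G0 y D r / Yavg G0 y < ctr G0 y D (swap_pos r i j) / Yavg G0 y"
      using lt Y0 by (simp add: divide_strict_right_mono)
    then show "DID G0 G1 y D (swap_pos r i j) < DID G0 G1 y D r"
      unfolding DID_def e1 by simp
    have "ctr G1 y D r / ctr G0 y D (swap_pos r i j) < ctr G1 y D r / ctr G0 y D r"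
      using lt c0 c1 by (simp add: divide_strict_left_mono)
    moreover have "Yavg G0 y / Yavg G1 y > 0" using Y0 Y1 by simp
    ultimately show "DIR G0 G1 y D (swap_pos r i j) < DIR G0 G1 y D r"
      unfolding DIR_def e1 by (rule mult_strict_right_mono)
  qed
qed

lemma DTD_DTR_same:
  assumes R: "is_ranking D r" and ij: "1 \<le> i" "i < j" "j \<le> card D"
    and g: "r i \<in> G1" "r j \<in> G1" and dj: "G0 \<inter> G1 = {}"
  shows "DTD G0 G1 y D (swap_pos r i j) = DTD G0 G1 y D r"
    "DTR G0 G1 y D (swap_pos r i j) = DTR G0 G1 y D r"
proof -
  have ng: "r i \<notin> G0" "r j \<notin> G0" using dj g by auto
  have e0: "exposure G0 D (swap_pos r i j) = exposure G0 D r" by (rule exposure_out[OF R ij ng])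
  have e1: "exposure G1 D (swap_pos r i j) = exposure G1 D r" by (rule exposure_in[OF R ij g])
  show "DTD G0 G1 y D (swap_pos r i j) = DTD G0 G1 y D r" unfolding DTD_def e0 e1 ..
  show "DTR G0 G1 y D (swap_pos r i j) = DTR G0 G1 y D r" unfolding DTR_def e0 e1 ..
qed

definition exr :: "nat \<Rightarrow> nat" where "exr k = k mod 3"
definition exy :: "nat \<Rightarrow> real" where "exy d = real d + 1"

lemma ex_adm: "admissible {0} {1,2} exy {0,1,2}"
  unfolding admissible_def exy_def by auto

lemma ex_rank: "is_ranking {0,1,2} exr"
proof -
  have c: "card {0::nat,1,2} = 3" by simp
  have s: "{1..3::nat} = {1,2,3}" by auto
  have "bij_betw exr {1,2,3} {0,1,2}"
    unfolding bij_betw_def inj_on_def exr_def by auto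
  then show ?thesis unfolding is_ranking_def c s by simp
qed

lemma ex_facts: "exr 1 = 1" "exr 2 = 2" "exy (exr 1) < exy (exr 2)" "card {0::nat,1,2} = 3"
  unfolding exr_def exy_def by auto

lemma not_fair_DTD: "\<not> intra_group_fair DTD"
proof
  assume "intra_group_fair DTD"
  then have H: "admissible {0} {1,2} exy {0,1,2} \<and> is_ranking {0,1,2} exr \<and> 1 \<le> (1::nat) \<and> (1::nat) < 2 \<and> 2 \<le> card {0::nat,1,2} \<and> exy (exr 1) < exy (exr 2) \<longrightarrow>
      (exr 1 \<in> {1,2} \<and> exr 2 \<in> {1,2} \<longrightarrow> DTD {0} {1,2} exy {0,1,2} (swap_pos exr 1 2) > DTD {0} {1,2} exy {0,1,2} exr) \<and>
      (exr 1 \<in> {0} \<and> exr 2 \<in> {0} \<longrightarrow> DTD {0} {1,2} exy {0,1,2} (swap_pos exr 1 2) < DTD {0} {1,2} exy {0,1,2} exr)"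
    unfolding intra_group_fair_def by (elim allE) assumption
  have "DTD {0} {1,2} exy {0,1,2} (swap_pos exr 1 2) > DTD {0} {1,2} exy {0,1,2} exr"
    using H ex_adm ex_rank ex_facts by simp
  moreover have "DTD {0} {1,2} exy {0,1,2} (swap_pos exr 1 2) = DTD {0} {1,2} exy {0,1,2} exr"
    by (rule DTD_DTR_same(1)[OF ex_rank]) (auto simp: exr_def)
  ultimately show False by simp
qed

lemma not_fair_DTR: "\<not> intra_group_fair DTR"
proof
  assume "intra_group_fair DTR"
  then have H: "admissible {0} {1,2} exy {0,1,2} \<and> is_ranking {0,1,2} exr \<and> 1 \<le> (1::nat) \<and> (1::nat) < 2 \<and> 2 \<le> card {0::nat,1,2} \<and> exy (exr 1) < exy (exr 2) \<longrightarrow>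
      (exr 1 \<in> {1,2} \<and> exr 2 \<in> {1,2} \<longrightarrow> DTR {0} {1,2} exy {0,1,2} (swap_pos exr 1 2) > DTR {0} {1,2} exy {0,1,2} exr) \<and>
      (exr 1 \<in> {0} \<and> exr 2 \<in> {0} \<longrightarrow> DTR {0} {1,2} exy {0,1,2} (swap_pos exr 1 2) < DTR {0} {1,2} exy {0,1,2} exr)"
    unfolding intra_group_fair_def by (elim allE) assumption
  have "DTR {0} {1,2} exy {0,1,2} (swap_pos exr 1 2) > DTR {0} {1,2} exy {0,1,2} exr"
    using H ex_adm ex_rank ex_facts by simp
  moreover have "DTR {0} {1,2} exy {0,1,2} (swap_pos exr 1 2) = DTR {0} {1,2} exy {0,1,2} exr"
    by (rule DTD_DTR_same(2)[OF ex_rank]) (auto simp: exr_def)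
  ultimately show False by simp
qed

theorem theorem5:
  shows "intra_group_fair DID \<and> intra_group_fair DIR \<and>
         \<not> intra_group_fair DTD \<and> \<not> intra_group_fair DTR"
  using fair_core not_fair_DTD not_fair_DTR unfolding intra_group_fair_def by blast

end
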